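(* Let $\boldsymbol{\mathcal W}(x,u)=\sum_{n\ge0}\sum_{k\ge0}x^nu^k\sum_{r\in\mathcal W_{n,k}}\d(r)$. Then \[ \boldsymbol{\mathcal W}=x(1+u)\boldsymbol{\mathcal W}+2ux^2\Big(\mathcal M\boldsymbol{\mathcal W}+\boldsymbol{\mathcal M}\mathcal W+\mathcal W\,\tfrac{\partial}{\partial x}(x\mathcal M)\Big) \] (all functions evaluated at $(x,u)$), and explicitly \[ \boldsymbol{\mathcal W}(x,u)=\frac{2ux^2}{\left((u-1)^2x^2-2(u+1)x+1\right)^2}. \]
   Context: Steps: $U=(1,1)$, $D=(1,-1)$, two distinguishable copies $O_1,O_2$ of $(1,0)$. $\mathcal W_{n,k}$: lattice paths from $(0,0)$ to $(n,0)$ with steps in $\{U,D,O_1,O_2\}$ using exactly $k$ steps of type $U$ or $O_1$; $\mathcal M_{n,k}\subseteq\mathcal W_{n,k}$: those staying weakly above the $x$-axis. For a path $r$ with heights $r_0,\dots,r_n$ (and $r_n=0$), $\d(r)=\sum_{i=0}^n|r_i|$. $\mathcal M(x,u)=\sum|\mathcal M_{n,k}|x^nu^k$, $\mathcal W(x,u)=\sum|\mathcal W_{n,k}|x^nu^k$, $\boldsymbol{\mathcal M}(x,u)=\sum_{n,k}x^nu^k\sum_{r\in\mathcal M_{n,k}}\d(r)$. *)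

theory Defs
  imports "HOL-Computational_Algebra.Computational_Algebra"
begin

text \<open>Steps: U = (1,1), D = (1,-1), and two distinguishable flat steps O1, O2 = (1,0).\<close>
datatype step = U | D | O1 | O2

fun step_h :: "step \<Rightarrow> int" where
  "step_h U = 1" | "step_h D = -1" | "step_h O1 = 0" | "step_h O2 = 0"

definition height :: "step list \<Rightarrow> nat \<Rightarrow> int" where
  "height r i = (\<Sum>j<i. step_h (r ! j))"

definition marked :: "step \<Rightarrow> bool" where
  "marked s \<longleftrightarrow> s = U \<or> s = O1"

definition Wset :: "nat \<Rightarrow> nat \<Rightarrow> step list set" where
  "Wset n k = {r. length r = n \<and> height r n = 0 \<and> length (filter marked r) = k}"

definition Mset :: "nat \<Rightarrow> nat \<Rightarrow> step list set" where
  "Mset n k = {r \<in> Wset n k. \<forall>i\<le>n. height r i \<ge> 0}"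

definition dsum :: "step list \<Rightarrow> int" where
  "dsum r = (\<Sum>i\<le>length r. \<bar>height r i\<bar>)"

text \<open>Bivariate generating functions are formal power series in x whose coefficients
  lie in the fraction field of Z[u] (the coefficient of x^n is a polynomial in u).\<close>
type_synonym bgf = "int poly fract fps"

definition gf :: "(nat \<Rightarrow> nat \<Rightarrow> int) \<Rightarrow> bgf" where
  "gf c = Abs_fps (\<lambda>n. to_fract (\<Sum>k\<le>n. monom (c n k) k))"

definition uvar :: bgf where
  "uvar = fps_const (to_fract [:0, 1:])"

definition Mgf :: bgf where "Mgf = gf (\<lambda>n k. int (card (Mset n k)))"
definition Wgf :: bgf where "Wgf = gf (\<lambda>n k. int (card (Wset n k)))"
definition Mbgf :: bgf where "Mbgf = gf (\<lambda>n k. \<Sum>r\<in>Mset n k. dsum r)"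
definition Wbgf :: bgf where "Wbgf = gf (\<lambda>n k. \<Sum>r\<in>Wset n k. dsum r)"

end

theory Submission imports Defs begin

lemma to_fract_of_int: "to_fract (of_int c :: int poly) = of_int c"
proof (induction c rule: int_induct[where k=0])
  case base then show ?case by simp
next
  case (step1 i) then show ?case by simp
next
  case (step2 i) then show ?case by simp
qed

lemma to_fract_power: "to_fract ((x::int poly) ^ k) = to_fract x ^ k" by (induction k) auto

lemma UNIV_step: "(UNIV :: step set) = {U, D, O1, O2}"
  using step.exhaust by auto

lemma height_0[simp]: "height r 0 = 0" by (simp add: height_def)
lemma height_Suc: "height r (Suc i) = height r i + step_h (r ! i)"
  by (simp add: height_def)
lemma height_Cons_Suc[simp]: "height (s # r) (Suc i) = step_h s + height r i"
  by (induction i) (auto simp: height_Suc)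

lemma height_append:
  "height (a @ b) i = (if i \<le> length a then height a i else height a (length a) + height b (i - length a))"
proof (induction i)
  case 0 then show ?case by simp
next
  case (Suc i)
  show ?case
  proof (cases "Suc i \<le> length a")
    case True then show ?thesis using Suc by (simp add: height_Suc nth_append)
  next
    case False
    then have "i \<ge> length a" by simp
    moreover have "Suc i - length a = Suc (i - length a)" using False by simp
    ultimately show ?thesis using Suc False
      by (cases "i = length a") (auto simp: height_Suc nth_append)
  qed
qed

lemma height_take: "i \<le> p \<Longrightarrow> height (take p t) i = height t i"
  by (simp add: height_def)

lemma step_h_bound: "step_h s \<ge> -1 \<and> step_h s \<le> 1" by (cases s) auto

lemma height_ivt:
  assumes "height t i \<le> -1"
  shows "\<exists>j\<le>i. j \<ge> 1 \<and> height t j = -1"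
  using assms
proof (induction i)
  case 0 then show ?case by simp
next
  case (Suc i)
  show ?case
  proof (cases "height t i \<le> -1")
    case True then show ?thesis using Suc by (meson le_SucI)
  next
    case False
    then have "height t (Suc i) = -1" using Suc.prems step_h_bound[of "t!i"] by (simp add: height_Suc)
    then show ?thesis by auto
  qed
qed


definition mk :: "step list \<Rightarrow> nat" where "mk r = length (filter marked r)"
definition isP :: "bool \<Rightarrow> step list \<Rightarrow> bool" where
  "isP nn r \<longleftrightarrow> height r (length r) = 0 \<and> (nn \<longrightarrow> (\<forall>i\<le>length r. height r i \<ge> 0))"

lemma all_le_Suc: "(\<forall>i\<le>Suc n. P i) \<longleftrightarrow> P 0 \<and> (\<forall>i\<le>n. P (Suc i))"
  proof
  assume "\<forall>i\<le>Suc n. P i" then show "P 0 \<and> (\<forall>i\<le>n. P (Suc i))" by simp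
next
  assume a: "P 0 \<and> (\<forall>i\<le>n. P (Suc i))"
  show "\<forall>i\<le>Suc n. P i"
  proof (intro allI impI)
    fix i assume "i \<le> Suc n" then show "P i" using a by (cases i) auto
  qed
qed

lemma mk_Cons[simp]: "mk (s # t) = (if marked s then Suc (mk t) else mk t)"
  by (simp add: mk_def)
lemma marked_simps[simp]: "marked U" "\<not> marked D" "marked O1" "\<not> marked O2"
  by (auto simp: marked_def)

lemma isP_flat: "step_h s = 0 \<Longrightarrow> isP nn (s # t) \<longleftrightarrow> isP nn t"
  unfolding isP_def by (simp only: length_Cons all_le_Suc height_Cons_Suc) simp

lemma dsum_Cons: "dsum (s # t) = (\<Sum>i\<le>length t. \<bar>step_h s + height t i\<bar>)"
  unfolding dsum_def by (simp add: sum.atMost_Suc_shift del: sum.atMost_Suc)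

lemma dsum_flat: "step_h s = 0 \<Longrightarrow> dsum (s # t) = dsum t"
  unfolding dsum_Cons by (simp add: dsum_def)

lemma not_isP_D: "\<not> isP True (D # t)"
  unfolding isP_def by (auto intro: exI[of _ 1])


fun sw :: "step \<Rightarrow> step" where
  "sw U = D" | "sw D = U" | "sw O1 = O1" | "sw O2 = O2"

lemma sw_sw[simp]: "sw (sw s) = s" by (cases s) auto
lemma step_h_sw[simp]: "step_h (sw s) = - step_h s" by (cases s) auto

lemma height_sw: "i \<le> length r \<Longrightarrow> height (map sw r) i = - height r i"
  unfolding height_def by (simp add: sum_negf)

lemma height_len_Cons: "height (s # r) (length (s # r)) = step_h s + height r (length r)"
  by simp

lemma mk_sw: "int (mk (map sw r)) = int (mk r) - height r (length r)"
proof (induction r)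
  case Nil then show ?case by (simp add: mk_def)
next
  case (Cons s r)
  then show ?case by (cases s) (simp_all del: length_Cons add: height_len_Cons)
qed

lemma isP_sw: "isP False (map sw r) \<longleftrightarrow> isP False r"
  unfolding isP_def by (simp add: height_sw)

lemma mk_sw_closed: "isP False r \<Longrightarrow> mk (map sw r) = mk r"
  using mk_sw[of r] unfolding isP_def by simp

lemma dsum_sw: "dsum (map sw r) = dsum r"
  unfolding dsum_def by (simp add: height_sw)

lemma height_aDb_le: "i \<le> length a \<Longrightarrow> height (a @ D # b) i = height a i"
  by (simp add: height_append)
lemma height_aDb_gt: "height (a @ D # b) (Suc (length a) + j) = height a (length a) - 1 + height b j"
  by (simp add: height_append)

lemma dec_U_build:
  assumes a: "isP True a" and b: "isP nn b"
  shows "isP nn (U # a @ D # b)"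
proof -
  have ha: "height a (length a) = 0" "\<And>i. i \<le> length a \<Longrightarrow> height a i \<ge> 0"
    using a by (auto simp: isP_def)
  have hb: "height b (length b) = 0" using b by (auto simp: isP_def)
  have len: "length (U # a @ D # b) = Suc (Suc (length a) + length b)" by simp
  have "height (U # a @ D # b) (length (U # a @ D # b)) = 0"
    unfolding len height_Cons_Suc height_aDb_gt using ha hb by simp
  moreover have "height (U # a @ D # b) i \<ge> 0" if nn: nn and i: "i \<le> length (U # a @ D # b)" for i
  proof (cases i)
    case 0 then show ?thesis by simp
  next
    case (Suc k)
    show ?thesis
    proof (cases "k \<le> length a")
      case True then show ?thesis using Suc ha by (simp add: height_aDb_le)
    next
      case False
      then obtain j where j: "k = Suc (length a) + j" by (metis add_Suc le_add1 less_imp_Suc_add not_le)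
      then have "j \<le> length b" using i Suc by simp
      then have "height b j \<ge> 0" using b nn by (auto simp: isP_def)
      then show ?thesis using Suc j ha height_aDb_gt[of a b j] by simp
    qed
  qed
  ultimately show ?thesis unfolding isP_def by auto
qed

lemma dec_U_split:
  assumes P: "isP nn (U # t)"
  shows "\<exists>a b. t = a @ D # b \<and> isP True a \<and> isP nn b"
proof -
  define m where "m = length t"
  have hm: "height t m = -1" using P unfolding isP_def m_def by simp
  then have "m \<ge> 1" by (cases m) auto
  define p where "p = (LEAST p. height t (Suc p) = -1)"
  have ex: "height t (Suc (m - 1)) = -1" using hm \<open>m \<ge> 1\<close> by simp
  have hp: "height t (Suc p) = -1" unfolding p_def by (rule LeastI[where P="\<lambda>p. height t (Suc p) = -1", OF ex])
  have pm: "p \<le> m - 1" unfolding p_def by (rule Least_le[where P="\<lambda>p. height t (Suc p) = -1", OF ex])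
  have nonneg: "height t i \<ge> 0" if "i \<le> p" for i
  proof (rule ccontr)
    assume "\<not> height t i \<ge> 0"
    then have "height t i \<le> -1" by simp
    then obtain j where j: "j \<le> i" "j \<ge> 1" "height t j = -1" using height_ivt by blast
    then obtain q where q: "j = Suc q" by (cases j) auto
    then have "q < p" using j that by simp
    then have "height t (Suc q) \<noteq> -1" unfolding p_def by (rule not_less_Least)
    then show False using j q by simp
  qed
  have "height t p + step_h (t ! p) = -1" using hp by (simp add: height_Suc)
  moreover have "height t p \<ge> 0" using nonneg by simp
  moreover note step_h_bound[of "t ! p"]
  ultimately have h0: "height t p = 0" and sD: "step_h (t ! p) = -1" by auto
  have tpD: "t ! p = D" using sD by (cases "t ! p") auto
  have plt: "p < length t" using pm \<open>m \<ge> 1\<close> m_def by simp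
  define a where "a = take p t"
  define b where "b = drop (Suc p) t"
  have t: "t = a @ D # b" unfolding a_def b_def using id_take_nth_drop[OF plt] tpD by simp
  have la: "length a = p" unfolding a_def using plt by simp
  have "isP True a" unfolding isP_def la
    using h0 nonneg by (simp add: a_def height_take)
  moreover have "isP nn b"
  proof -
    have lb: "Suc p + length b = m" unfolding b_def m_def using plt by simp
    have "height t (Suc (length a) + length b) = height a (length a) - 1 + height b (length b)"
      by (subst t, rule height_aDb_gt)
    then have "height b (length b) = 0" using lb la hm h0 a_def height_take by auto
    moreover have "height b j \<ge> 0" if nn and j: "j \<le> length b" for j
    proof -
      have "Suc (Suc p + j) \<le> length (U # t)" using j lb m_def by simp
      then have "height (U # t) (Suc (Suc p + j)) \<ge> 0" using P that by (auto simp: isP_def)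
      then have "1 + height t (Suc (length a) + j) \<ge> 0" using la by simp
      then have "1 + (height a (length a) - 1 + height b j) \<ge> 0"
        by (subst (asm) t, subst (asm) height_aDb_gt) simp
      then show ?thesis using la h0 a_def height_take by auto
    qed
    ultimately show ?thesis unfolding isP_def by auto
  qed
  ultimately show ?thesis using t by blast
qed

lemma dec_U_len_le:
  assumes eq: "a @ D # b = a' @ D # b'" and a: "isP True a" and a': "isP True a'"
  shows "length a \<le> length a'"
proof (rule ccontr)
  assume "\<not> length a \<le> length a'"
  then have le: "Suc (length a') \<le> length a" by simp
  have "height (a' @ D # b') (Suc (length a') + 0) = height a' (length a') - 1 + height b' 0"
    by (rule height_aDb_gt)
  then have "height (a' @ D # b') (Suc (length a')) = -1" using a' by (simp add: isP_def)
  moreover have "height (a @ D # b) (Suc (length a')) = height a (Suc (length a'))"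
    using le by (rule height_aDb_le)
  moreover have "height a (Suc (length a')) \<ge> 0" using a le by (auto simp: isP_def)
  ultimately show False using eq by simp
qed

lemma dec_U_unique:
  assumes eq: "a @ D # b = a' @ D # b'" and a: "isP True a" and a': "isP True a'"
  shows "a = a' \<and> b = b'"
proof -
  have "length a = length a'" using dec_U_len_le[OF eq a a'] dec_U_len_le[OF eq[symmetric] a' a] by simp
  then show ?thesis using eq by (simp add: append_eq_append_conv)
qed

lemma mk_UaDb: "mk (U # a @ D # b) = Suc (mk a + mk b)"
  by (simp add: mk_def)


lemma dsum_UaDb:
  assumes a: "isP True a"
  shows "dsum (U # a @ D # b) = dsum a + int (length a) + 1 + dsum b"
proof -
  let ?t = "a @ D # b"
  let ?f = "\<lambda>i. \<bar>1 + height ?t i\<bar>"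
  have ha: "height a (length a) = 0" "\<And>i. i \<le> length a \<Longrightarrow> height a i \<ge> 0"
    using a by (auto simp: isP_def)
  have "dsum (U # ?t) = (\<Sum>i\<le>length a + Suc (length b). ?f i)"
    by (simp add: dsum_Cons)
  also have "\<dots> = (\<Sum>i\<le>length a. ?f i) + (\<Sum>i = Suc (length a)..length a + Suc (length b). ?f i)"
    by (rule sum_up_index_split)
  also have "(\<Sum>i\<le>length a. ?f i) = (\<Sum>i\<le>length a. 1 + \<bar>height a i\<bar>)"
    using ha by (intro sum.cong) (auto simp: height_aDb_le)
  also have "\<dots> = int (length a) + 1 + dsum a"
    by (simp add: sum.distrib dsum_def)
  also have "(\<Sum>i = Suc (length a)..length a + Suc (length b). ?f i)
      = (\<Sum>i = 0 + Suc (length a)..length b + Suc (length a). ?f i)" by (simp add: add.commute)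
  also have "\<dots> = (\<Sum>j = 0..length b. ?f (j + Suc (length a)))"
    by (rule sum.shift_bounds_cl_nat_ivl)
  also have "\<dots> = (\<Sum>j = 0..length b. \<bar>height b j\<bar>)"
  proof (intro sum.cong refl)
    fix j
    have "height ?t (Suc (length a) + j) = height a (length a) - 1 + height b j" by (rule height_aDb_gt)
    then show "?f (j + Suc (length a)) = \<bar>height b j\<bar>" using ha by (simp add: add.commute)
  qed
  also have "\<dots> = dsum b" by (simp add: dsum_def atLeast0AtMost)
  finally show ?thesis by simp
qed


definition uu :: "int poly fract" where "uu = to_fract [:0, 1:]"

definition lsets :: "bool \<Rightarrow> nat \<Rightarrow> step list set" where
  "lsets nn n = {r. length r = n \<and> isP nn r}"

definition cs :: "bool \<Rightarrow> (step list \<Rightarrow> int) \<Rightarrow> nat \<Rightarrow> int poly fract" where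
  "cs nn f n = (\<Sum>r\<in>lsets nn n. of_int (f r) * uu ^ mk r)"

definition S :: "bool \<Rightarrow> (step list \<Rightarrow> int) \<Rightarrow> bgf" where
  "S nn f = Abs_fps (cs nn f)"

lemma S_nth[simp]: "S nn f $ n = cs nn f n" by (simp add: S_def)

lemma finite_len: "finite {r :: step list. length r = n}"
proof -
  have f: "finite (UNIV :: step set)" by (simp add: UNIV_step)
  show ?thesis using finite_lists_length_eq[OF f, of n] by simp
qed

lemma finite_lsets[simp]: "finite (lsets nn n)"
  unfolding lsets_def by (rule finite_subset[OF _ finite_len[of n]]) auto

lemma to_fract_monom: "to_fract (monom c k) = of_int c * uu ^ k"
proof -
  have "monom c k = of_int c * [:0,1:] ^ k" by (simp add: monom_altdef of_int_poly)
  then show ?thesis by (simp add: uu_def to_fract_power to_fract_of_int)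
qed

lemma mk_le: "mk r \<le> length r" by (simp add: mk_def)

lemma gf_S:
  assumes "\<And>n k. A n k = {r \<in> lsets nn n. mk r = k}"
  shows "gf (\<lambda>n k. \<Sum>r\<in>A n k. f r) = S nn f"
proof (rule fps_ext)
  fix n
  have "gf (\<lambda>n k. \<Sum>r\<in>A n k. f r) $ n = (\<Sum>k\<le>n. of_int (\<Sum>r\<in>A n k. f r) * uu ^ k)"
    by (simp add: gf_def to_fract_monom)
  also have "\<dots> = (\<Sum>k\<le>n. \<Sum>r\<in>{r \<in> lsets nn n. mk r = k}. of_int (f r) * uu ^ mk r)"
    by (intro sum.cong refl) (auto simp: assms sum_distrib_right)
  also have "\<dots> = cs nn f n" unfolding cs_def
    by (rule sum.group[OF finite_lsets]) (auto simp: lsets_def intro: order.trans[OF mk_le])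
  finally show "gf (\<lambda>n k. \<Sum>r\<in>A n k. f r) $ n = S nn f $ n" by simp
qed

lemma Wbgf_S: "Wbgf = S False dsum"
  unfolding Wbgf_def by (rule gf_S) (auto simp: Wset_def lsets_def isP_def mk_def)
lemma Mbgf_S: "Mbgf = S True dsum"
  unfolding Mbgf_def by (rule gf_S) (auto simp: Mset_def Wset_def lsets_def isP_def mk_def)
lemma Wgf_S: "Wgf = S False (\<lambda>_. 1)"
  unfolding Wgf_def by (subst gf_S[symmetric]) (auto simp: Wset_def lsets_def isP_def mk_def)
lemma Mgf_S: "Mgf = S True (\<lambda>_. 1)"
  unfolding Mgf_def by (subst gf_S[symmetric]) (auto simp: Mset_def Wset_def lsets_def isP_def mk_def)


definition pairs :: "bool \<Rightarrow> bool \<Rightarrow> nat \<Rightarrow> (step list \<times> step list) set" where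
  "pairs n1 n2 k = {(a,b). length a + length b = k \<and> isP n1 a \<and> isP n2 b}"

lemma prod_S:
  "(S n1 f * S n2 g) $ k = (\<Sum>(a,b)\<in>pairs n1 n2 k. of_int (f a) * of_int (g b) * uu ^ (mk a + mk b))"
proof -
  have "(S n1 f * S n2 g) $ k = (\<Sum>i=0..k. cs n1 f i * cs n2 g (k - i))" by (simp add: fps_mult_nth)
  also have "\<dots> = (\<Sum>i=0..k. \<Sum>a\<in>lsets n1 i. \<Sum>b\<in>lsets n2 (k - i).
        of_int (f a) * of_int (g b) * uu ^ (mk a + mk b))"
    unfolding cs_def by (simp add: sum_product power_add mult_ac)
  also have "\<dots> = (\<Sum>i=0..k. \<Sum>(a,b)\<in>lsets n1 i \<times> lsets n2 (k - i).
        of_int (f a) * of_int (g b) * uu ^ (mk a + mk b))"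
    by (simp add: sum.cartesian_product)
  also have "\<dots> = (\<Sum>(i,ab)\<in>Sigma {0..k} (\<lambda>i. lsets n1 i \<times> lsets n2 (k - i)).
        (case ab of (a,b) \<Rightarrow> of_int (f a) * of_int (g b) * uu ^ (mk a + mk b)))"
    by (subst sum.Sigma) auto
  also have "\<dots> = (\<Sum>(a,b)\<in>pairs n1 n2 k. of_int (f a) * of_int (g b) * uu ^ (mk a + mk b))"
    by (rule sum.reindex_bij_witness[where i="\<lambda>(a,b). (length a, (a,b))" and j="snd"])
       (auto simp: pairs_def lsets_def)
  finally show ?thesis .
qed

definition TU :: "bool \<Rightarrow> nat \<Rightarrow> step list set" where
  "TU nn m = {t. length t = m \<and> isP nn (U # t)}"

lemma TU_0: "TU nn 0 = {}"
  by (auto simp: TU_def isP_def)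

lemma TU_Suc: "TU nn (Suc m) = (\<lambda>(a,b). a @ D # b) ` pairs True nn m"
proof
  show "TU nn (Suc m) \<subseteq> (\<lambda>(a,b). a @ D # b) ` pairs True nn m"
  proof
    fix t assume "t \<in> TU nn (Suc m)"
    then have l: "length t = Suc m" and P: "isP nn (U # t)" by (auto simp: TU_def)
    obtain a b where "t = a @ D # b" "isP True a" "isP nn b" using dec_U_split[OF P] by blast
    then show "t \<in> (\<lambda>(a,b). a @ D # b) ` pairs True nn m" using l
      by (intro image_eqI[where x="(a,b)"]) (auto simp: pairs_def)
  qed
  show "(\<lambda>(a,b). a @ D # b) ` pairs True nn m \<subseteq> TU nn (Suc m)"
    by (auto simp: pairs_def TU_def intro: dec_U_build)
qed

lemma inj_pairs: "inj_on (\<lambda>(a,b). a @ D # b) (pairs True nn m)"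
  by (auto simp: inj_on_def pairs_def dest: dec_U_unique)

definition UT :: "bool \<Rightarrow> (step list \<Rightarrow> int) \<Rightarrow> nat \<Rightarrow> int poly fract" where
  "UT nn f m = (\<Sum>t\<in>TU nn m. of_int (f (U # t)) * uu ^ mk (U # t))"

lemma UT_0: "UT nn f 0 = 0" by (simp add: UT_def TU_0)

lemma UT_Suc: "UT nn f (Suc m) =
   uu * (\<Sum>(a,b)\<in>pairs True nn m. of_int (f (U # a @ D # b)) * uu ^ (mk a + mk b))"
  unfolding UT_def TU_Suc
  by (subst sum.reindex[OF inj_pairs]) (simp add: sum_distrib_left split_def mk_def mult_ac)


definition Ts :: "bool \<Rightarrow> nat \<Rightarrow> step \<Rightarrow> step list set" where
  "Ts nn m s = {t. length t = m \<and> isP nn (s # t)}"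

lemma cs_split: "cs nn f (Suc m) = (\<Sum>s\<in>UNIV. \<Sum>t\<in>Ts nn m s. of_int (f (s # t)) * uu ^ mk (s # t))"
proof -
  have fin: "finite (Ts nn m s)" for s
    by (rule finite_subset[OF _ finite_len[of m]]) (auto simp: Ts_def)
  have "cs nn f (Suc m) = (\<Sum>(s,t)\<in>Sigma UNIV (Ts nn m). of_int (f (s # t)) * uu ^ mk (s # t))"
    unfolding cs_def
    by (rule sum.reindex_bij_witness[where i="\<lambda>(s,t). s # t" and j="\<lambda>r. (hd r, tl r)"])
       (auto simp: lsets_def Ts_def length_Suc_conv)
  also have "\<dots> = (\<Sum>s\<in>UNIV. \<Sum>t\<in>Ts nn m s. of_int (f (s # t)) * uu ^ mk (s # t))"
    by (subst sum.Sigma) (auto simp: fin UNIV_step)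
  finally show ?thesis .
qed

lemma Ts_flat: "step_h s = 0 \<Longrightarrow> Ts nn m s = lsets nn m"
  by (auto simp: Ts_def lsets_def isP_flat)

lemma Ts_U: "Ts nn m U = TU nn m" by (simp add: Ts_def TU_def)
lemma Ts_D_True: "Ts True m D = {}" by (auto simp: Ts_def not_isP_D)

lemma sum_D:
  assumes sym: "\<And>r. f (map sw r) = f r"
  shows "(\<Sum>t\<in>Ts False m D. of_int (f (D # t)) * uu ^ mk (D # t)) = UT False f m"
  unfolding UT_def
proof (rule sum.reindex_bij_witness[where i="map sw" and j="map sw"])
  fix t assume "t \<in> Ts False m D"
  then have P: "isP False (D # t)" and l: "length t = m" by (auto simp: Ts_def)
  have e: "U # map sw t = map sw (D # t)" by simp
  show "map sw (map sw t) = t" by (simp add: comp_def)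
  have "isP False (map sw (D # t))" using P isP_sw by blast
  then show "map sw t \<in> TU False m" using l unfolding TU_def by simp
  show "of_int (f (U # map sw t)) * uu ^ mk (U # map sw t) = of_int (f (D # t)) * uu ^ mk (D # t)"
    unfolding e sym mk_sw_closed[OF P] ..
next
  fix t assume "t \<in> TU False m"
  then have P: "isP False (U # t)" and l: "length t = m" by (auto simp: TU_def)
  have e: "D # map sw t = map sw (U # t)" by simp
  show "map sw (map sw t) = t" by (simp add: comp_def)
  have "isP False (map sw (U # t))" using P isP_sw by blast
  then show "map sw t \<in> Ts False m D" using l unfolding Ts_def by simp
qed

lemma cs_Suc:
  assumes flat: "\<And>s t. step_h s = 0 \<Longrightarrow> f (s # t) = f t"
    and sym: "\<And>r. f (map sw r) = f r"
  shows "cs nn f (Suc m) = (uu + 1) * cs nn f m + (if nn then 1 else 2) * UT nn f m"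
proof -
  have O1: "(\<Sum>t\<in>Ts nn m O1. of_int (f (O1 # t)) * uu ^ mk (O1 # t)) = uu * cs nn f m"
    by (simp add: Ts_flat cs_def flat sum_distrib_left mult_ac)
  have O2: "(\<Sum>t\<in>Ts nn m O2. of_int (f (O2 # t)) * uu ^ mk (O2 # t)) = cs nn f m"
    by (simp add: Ts_flat cs_def flat)
  have Uu: "(\<Sum>t\<in>Ts nn m U. of_int (f (U # t)) * uu ^ mk (U # t)) = UT nn f m"
    by (simp add: Ts_U UT_def)
  have Dd: "(\<Sum>t\<in>Ts nn m D. of_int (f (D # t)) * uu ^ mk (D # t)) = (if nn then 0 else UT nn f m)"
    using sum_D[of f, OF sym, of m] by (cases nn) (auto simp: Ts_D_True)
  have four: "(\<Sum>s\<in>{U,D,O1,O2}. h s) = h U + h D + h O1 + h O2" for h :: "step \<Rightarrow> int poly fract"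
    by simp
  show ?thesis unfolding cs_split UNIV_step four O1 O2 Uu Dd
    by (simp add: algebra_simps)
qed


lemma lsets_0: "lsets nn 0 = {[]}" by (auto simp: lsets_def isP_def)
lemma cs_0: "cs nn f 0 = of_int (f [])" by (simp add: cs_def lsets_0 mk_def)

lemma fps_rec:
  assumes rec: "\<And>m. cs nn f (Suc m) = (uu + 1) * cs nn f m + of_nat c * UT nn f m"
    and U0: "UT nn f 0 = 0" and US: "\<And>m. UT nn f (Suc m) = uu * G $ m"
  shows "S nn f = fps_const (cs nn f 0) + fps_X * (fps_const (uu + 1) * S nn f)
                  + fps_X ^ 2 * (fps_const (of_nat c * uu) * G)"
proof (rule fps_ext)
  fix n
  show "S nn f $ n = (fps_const (cs nn f 0) + fps_X * (fps_const (uu + 1) * S nn f)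
                  + fps_X ^ 2 * (fps_const (of_nat c * uu) * G)) $ n"
  proof (cases n)
    case 0 then show ?thesis by (simp add: fps_X_power_mult_nth)
  next
    case (Suc m)
    show ?thesis
    proof (cases m)
      case 0 then show ?thesis using Suc rec[of 0] U0 by (simp add: fps_X_power_mult_nth)
    next
      case (Suc k)
      then show ?thesis using \<open>n = Suc m\<close> rec[of m] US[of k]
        by (simp add: fps_X_power_mult_nth)
    qed
  qed
qed

lemma flat_one: "step_h s = 0 \<Longrightarrow> (\<lambda>_. 1::int) (s # t) = (\<lambda>_. 1) t" by simp

lemma UT_one: "UT nn (\<lambda>_. 1) (Suc m) = uu * (S True (\<lambda>_. 1) * S nn (\<lambda>_. 1)) $ m"
  by (simp add: UT_Suc prod_S)

lemma UT_dsum: "UT nn dsum (Suc m) = uu * (S True (\<lambda>a. dsum a + int (length a) + 1) * S nn (\<lambda>_. 1)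
        + S True (\<lambda>_. 1) * S nn dsum) $ m"
proof -
  have "UT nn dsum (Suc m) = uu * (\<Sum>(a,b)\<in>pairs True nn m.
      of_int (dsum a + int (length a) + 1) * of_int 1 * uu ^ (mk a + mk b)
    + of_int 1 * of_int (dsum b) * uu ^ (mk a + mk b))"
    unfolding UT_Suc
    by (intro arg_cong[where f="\<lambda>x. uu * x"] sum.cong refl)
       (auto simp: pairs_def dsum_UaDb algebra_simps)
  also have "\<dots> = uu * (S True (\<lambda>a. dsum a + int (length a) + 1) * S nn (\<lambda>_. 1)
        + S True (\<lambda>_. 1) * S nn dsum) $ m"
    by (simp only: fps_add_nth prod_S sum.distrib[symmetric]) (simp add: split_def)
  finally show ?thesis .
qed

lemma S_len: "S True (\<lambda>a. dsum a + int (length a) + 1) = S True dsum + fps_deriv (fps_X * S True (\<lambda>_. 1))"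
proof (rule fps_ext)
  fix n
  have "cs True (\<lambda>a. dsum a + int (length a) + 1) n = cs True dsum n + of_nat (n + 1) * cs True (\<lambda>_. 1) n"
    unfolding cs_def by (simp add: sum.distrib sum_distrib_left lsets_def algebra_simps)
  then show "S True (\<lambda>a. dsum a + int (length a) + 1) $ n = (S True dsum + fps_deriv (fps_X * S True (\<lambda>_. 1))) $ n"
    by (simp add: algebra_simps)
qed


lemma UT_one': "UT nn (\<lambda>_. 1) (Suc m) = uu * (Mgf * S nn (\<lambda>_. 1)) $ m"
  using UT_one by (simp add: Mgf_S)

lemma eW: "Wgf = 1 + fps_X * (fps_const (uu + 1) * Wgf) + fps_X ^ 2 * (fps_const (2 * uu) * (Mgf * Wgf))"
proof -
  have "S False (\<lambda>_. 1) = fps_const (cs False (\<lambda>_. 1) 0) + fps_X * (fps_const (uu + 1) * S False (\<lambda>_. 1))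
                  + fps_X ^ 2 * (fps_const (of_nat 2 * uu) * (Mgf * S False (\<lambda>_. 1)))"
    by (rule fps_rec[OF _ UT_0 UT_one']) (simp add: cs_Suc)
  then show ?thesis by (simp add: cs_0 Wgf_S)
qed

lemma eM: "Mgf = 1 + fps_X * (fps_const (uu + 1) * Mgf) + fps_X ^ 2 * (fps_const uu * (Mgf * Mgf))"
proof -
  have "S True (\<lambda>_. 1) = fps_const (cs True (\<lambda>_. 1) 0) + fps_X * (fps_const (uu + 1) * S True (\<lambda>_. 1))
                  + fps_X ^ 2 * (fps_const (of_nat 1 * uu) * (Mgf * S True (\<lambda>_. 1)))"
    by (rule fps_rec[OF _ UT_0 UT_one']) (simp add: cs_Suc)
  then show ?thesis by (simp add: cs_0 Mgf_S)
qed

lemma UT_dsum': "UT nn dsum (Suc m) = uu * ((Mbgf + fps_deriv (fps_X * Mgf)) * S nn (\<lambda>_. 1) + Mgf * S nn dsum) $ m"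
  using UT_dsum by (simp add: Mgf_S Mbgf_S S_len)

lemma rec_dsum: "cs nn dsum (Suc m) = (uu + 1) * cs nn dsum m + of_nat (if nn then 1 else 2) * UT nn dsum m"
  by (simp add: cs_Suc dsum_flat dsum_sw)

lemma eWb: "Wbgf = fps_X * (fps_const (uu + 1) * Wbgf) + fps_X ^ 2 * (fps_const (2 * uu) * ((Mbgf + fps_deriv (fps_X * Mgf)) * Wgf + Mgf * Wbgf))"
proof -
  have "S False dsum = fps_const (cs False dsum 0) + fps_X * (fps_const (uu + 1) * S False dsum)
                  + fps_X ^ 2 * (fps_const (of_nat 2 * uu) * ((Mbgf + fps_deriv (fps_X * Mgf)) * S False (\<lambda>_. 1) + Mgf * S False dsum))"
    by (rule fps_rec[OF _ UT_0 UT_dsum']) (simp add: rec_dsum)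
  then show ?thesis by (simp add: cs_0 Wgf_S Wbgf_S dsum_def)
qed

lemma eMb: "Mbgf = fps_X * (fps_const (uu + 1) * Mbgf) + fps_X ^ 2 * (fps_const uu * ((Mbgf + fps_deriv (fps_X * Mgf)) * Mgf + Mgf * Mbgf))"
proof -
  have "S True dsum = fps_const (cs True dsum 0) + fps_X * (fps_const (uu + 1) * S True dsum)
                  + fps_X ^ 2 * (fps_const (of_nat 1 * uu) * ((Mbgf + fps_deriv (fps_X * Mgf)) * S True (\<lambda>_. 1) + Mgf * S True dsum))"
    by (rule fps_rec[OF _ UT_0 UT_dsum']) (simp add: rec_dsum)
  then show ?thesis by (simp add: cs_0 Mgf_S Mbgf_S dsum_def)
qed


lemma fc: "fps_const (uu + 1) = uvar + 1" "fps_const (2 * uu) = 2 * uvar" "fps_const uu = uvar"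
  by (simp_all add: uvar_def uu_def fps_const_add fps_const_mult)

lemma part1: "Wbgf = fps_X * (1 + uvar) * Wbgf
            + 2 * uvar * fps_X ^ 2 * (Mgf * Wbgf + Mbgf * Wgf + Wgf * fps_deriv (fps_X * Mgf))"
proof -
  have "Wbgf = fps_X * ((uvar + 1) * Wbgf) + fps_X ^ 2 * (2 * uvar * ((Mbgf + fps_deriv (fps_X * Mgf)) * Wgf + Mgf * Wbgf))"
    using eWb by (simp only: fc)
  then show ?thesis by (simp add: algebra_simps)
qed

lemma rearr1: "w = 1 + p + q \<Longrightarrow> w - p - q = (1::'a::ring_1)" by simp
lemma rearr0: "w = p + q \<Longrightarrow> w - p - q = (0::'a::ab_group_add)" by simp

lemma deriv_uvar[simp]: "fps_deriv uvar = 0" by (simp add: uvar_def)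

lemma part2: "Wbgf * ((uvar - 1) ^ 2 * fps_X ^ 2 - 2 * (uvar + 1) * fps_X + 1) ^ 2 = 2 * uvar * fps_X ^ 2"
proof -
  define x :: bgf where "x = fps_X"
  define u where "u = uvar"
  define M where "M = Mgf"
  define W where "W = Wgf"
  define Mb where "Mb = Mbgf"
  define Wb where "Wb = Wbgf"
  define N' where "N' = fps_deriv (x * M)"
  have hW: "W = 1 + x * ((u + 1) * W) + x ^ 2 * (2 * u * (M * W))"
    using eW unfolding fc x_def u_def M_def W_def .
  have hM: "M = 1 + x * ((u + 1) * M) + x ^ 2 * (u * (M * M))"
    using eM unfolding fc x_def u_def M_def .
  have hWb: "Wb = x * ((u + 1) * Wb) + x ^ 2 * (2 * u * ((Mb + N') * W + M * Wb))"
    using eWb unfolding fc x_def u_def M_def W_def Wb_def Mb_def N'_def .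
  have hMb: "Mb = x * ((u + 1) * Mb) + x ^ 2 * (u * ((Mb + N') * M + M * Mb))"
    using eMb unfolding fc x_def u_def M_def Mb_def N'_def .
  have e1: "x * M = x + x * ((u + 1) * (x * M)) + x * (u * ((x * M) * (x * M)))"
    using hM by algebra
  have d: "fps_deriv (x * M) = fps_deriv (x + x * ((u + 1) * (x * M)) + x * (u * ((x * M) * (x * M))))"
    by (rule arg_cong[OF e1])
  have d2: "fps_deriv (x + x * ((u + 1) * (x * M)) + x * (u * ((x * M) * (x * M))))
     = 1 + ((u + 1) * (x * M) + x * ((u + 1) * N')) + (u * ((x * M) * (x * M)) + x * (u * (N' * (x * M) + x * M * N')))"
    by (simp add: N'_def x_def u_def algebra_simps)
  have hN: "N' = 1 + ((u + 1) * (x * M) + x * ((u + 1) * N')) + (u * ((x * M) * (x * M)) + x * (u * (N' * (x * M) + x * M * N')))"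
    by (rule trans[OF trans[OF N'_def d] d2])
  define a where "a = 1 - x * (u + 1)"
  define L where "L = a - 2 * u * x ^ 2 * M"
  have rW: "W - x * ((u + 1) * W) - x ^ 2 * (2 * u * (M * W)) = 1" by (rule rearr1[OF hW])
  have rM: "M - x * ((u + 1) * M) - x ^ 2 * (u * (M * M)) = 1" by (rule rearr1[OF hM])
  have rN: "N' - ((u + 1) * (x * M) + x * ((u + 1) * N')) - (u * ((x * M) * (x * M)) + x * (u * (N' * (x * M) + x * M * N'))) = 1"
    by (rule rearr1[OF hN])
  have rMb: "Mb - x * ((u + 1) * Mb) - x ^ 2 * (u * ((Mb + N') * M + M * Mb)) = 0" by (rule rearr0[OF hMb])
  have rWb: "Wb - x * ((u + 1) * Wb) - x ^ 2 * (2 * u * ((Mb + N') * W + M * Wb)) = 0" by (rule rearr0[OF hWb])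
  have WL: "W * L = 1"
  proof -
    have "W * L = W - x * ((u + 1) * W) - x ^ 2 * (2 * u * (M * W))"
      by (simp add: L_def a_def algebra_simps power2_eq_square)
    then show ?thesis using rW by simp
  qed
  have Mq: "a * M - u * x ^ 2 * M * M = 1"
  proof -
    have "a * M - u * x ^ 2 * M * M = M - x * ((u + 1) * M) - x ^ 2 * (u * (M * M))"
      by (simp add: a_def algebra_simps power2_eq_square)
    then show ?thesis using rM by simp
  qed
  have LL: "L * L = a * a - 4 * u * x ^ 2"
  proof -
    have "L * L = a * a - 4 * u * x ^ 2 * (a * M - u * x ^ 2 * M * M)"
      unfolding L_def by (simp add: algebra_simps power2_eq_square)
    then show ?thesis using Mq by simp
  qed
  have NL: "N' * L = M"
  proof -
    have "N' * L = (N' - ((u + 1) * (x * M) + x * ((u + 1) * N')) - (u * ((x * M) * (x * M)) + x * (u * (N' * (x * M) + x * M * N'))))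
        + (x * ((u + 1) * M) + x ^ 2 * (u * (M * M)))"
      by (simp add: L_def a_def algebra_simps power2_eq_square)
    also have "\<dots> = 1 + (x * ((u + 1) * M) + x ^ 2 * (u * (M * M)))" unfolding rN ..
    also have "\<dots> = (M - x * ((u + 1) * M) - x ^ 2 * (u * (M * M))) + (x * ((u + 1) * M) + x ^ 2 * (u * (M * M)))"
      unfolding rM ..
    also have "\<dots> = M" by simp
    finally show ?thesis .
  qed
  have MbL: "Mb * L = u * x ^ 2 * N' * M"
  proof -
    have "Mb * L = (Mb - x * ((u + 1) * Mb) - x ^ 2 * (u * ((Mb + N') * M + M * Mb))) + u * x ^ 2 * N' * M"
      by (simp add: L_def a_def algebra_simps power2_eq_square)
    then show ?thesis using rMb by simp
  qed
  have WbL: "Wb * L = 2 * u * x ^ 2 * (Mb + N') * W"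
  proof -
    have "Wb * L = (Wb - x * ((u + 1) * Wb) - x ^ 2 * (2 * u * ((Mb + N') * W + M * Wb))) + 2 * u * x ^ 2 * (Mb + N') * W"
      by (simp add: L_def a_def algebra_simps power2_eq_square)
    then show ?thesis using rWb by simp
  qed
  have "Wb * (L * L) * (L * L) = 2 * u * x ^ 2 * (W * L) * (Mb * L + N' * L) * L"
    using WbL by (simp add: algebra_simps)
  also have "\<dots> = 2 * u * x ^ 2 * (u * x ^ 2 * N' * M + M) * L"
    unfolding WL MbL NL by simp
  also have "\<dots> = 2 * u * x ^ 2 * (u * x ^ 2 * M * (N' * L) + M * L)"
    by (simp add: algebra_simps)
  also have "\<dots> = 2 * u * x ^ 2 * (u * x ^ 2 * M * M + M * L)"
    unfolding NL ..
  also have "\<dots> = 2 * u * x ^ 2 * (a * M - u * x ^ 2 * M * M)"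
    unfolding L_def by (simp add: algebra_simps power2_eq_square)
  also have "\<dots> = 2 * u * x ^ 2" using Mq by simp
  finally have fin: "Wb * (L * L) * (L * L) = 2 * u * x ^ 2" .
  have "(u - 1) ^ 2 * x ^ 2 - 2 * (u + 1) * x + 1 = L * L"
    unfolding LL a_def by (simp add: algebra_simps power2_eq_square)
  then show ?thesis
    using fin unfolding x_def[symmetric] u_def[symmetric] Wb_def[symmetric]
    by (simp add: power2_eq_square mult.assoc)
qed


theorem proposition3p4:
  shows "Wbgf = fps_X * (1 + uvar) * Wbgf
            + 2 * uvar * fps_X ^ 2 * (Mgf * Wbgf + Mbgf * Wgf + Wgf * fps_deriv (fps_X * Mgf))
         \<and> Wbgf = 2 * uvar * fps_X ^ 2
            / ((uvar - 1) ^ 2 * fps_X ^ 2 - 2 * (uvar + 1) * fps_X + 1) ^ 2"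
proof
  show "Wbgf = fps_X * (1 + uvar) * Wbgf
            + 2 * uvar * fps_X ^ 2 * (Mgf * Wbgf + Mbgf * Wgf + Wgf * fps_deriv (fps_X * Mgf))"
    by (rule part1)
  define Q :: bgf where "Q = ((uvar - 1) ^ 2 * fps_X ^ 2 - 2 * (uvar + 1) * fps_X + 1) ^ 2"
  have Q0: "Q $ 0 = 1" unfolding Q_def by (simp add: power2_eq_square uvar_def)
  have "2 * uvar * fps_X ^ 2 / Q = 2 * uvar * fps_X ^ 2 * inverse Q"
    using Q0 by (simp add: fps_divide_unit)
  also have "\<dots> = Wbgf * (Q * inverse Q)" using part2 unfolding Q_def[symmetric] by (simp add: mult.assoc)
  also have "\<dots> = Wbgf" using inverse_mult_eq_1'[of Q] Q0 by simp
  finally show "Wbgf = 2 * uvar * fps_X ^ 2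
            / ((uvar - 1) ^ 2 * fps_X ^ 2 - 2 * (uvar + 1) * fps_X + 1) ^ 2" unfolding Q_def by simp
qed

end
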